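(* Let $G$ be a finite connected simple graph not isomorphic to $C_3$, $C_4$ or $C_5$. Then at least one of $G$, $\mathrm{L}(G)$, $\mathrm{L}^{(2)}(G)$ is not strongly regular; more precisely, there is $m\in\{0,1,2\}$ such that $\mathrm{L}^{(m)}(G)$ is not strongly regular.
   Context: A finite simple graph on $v\ge1$ vertices is strongly regular with parameters $(v,k,\lambda,\mu)$, where $k,\lambda,\mu$ are nonnegative integers, if every vertex has degree $k$, every pair of adjacent vertices has exactly $\lambda$ common neighbours, and every pair of distinct non-adjacent vertices has exactly $\mu$ common neighbours; by convention the graph with no vertices is not strongly regular. $\mathrm{L}(G)$ has vertex set $E(G)$, two vertices adjacent iff the corresponding edges share an endpoint; $\mathrm{L}^{(0)}(G)=G$, $\mathrm{L}^{(m)}(G)=\mathrm{L}(\mathrm{L}^{(m-1)}(G))$. $C_n$ is the cycle on $n$ vertices. *)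

theory Defs
  imports Main
begin

text \<open>A graph is a pair (vertex set, edge set); edges are 2-element vertex sets.\<close>
type_synonym 'a graph = "'a set \<times> 'a set set"

definition simple_graph :: "'a graph \<Rightarrow> bool" where
  "simple_graph G \<longleftrightarrow> finite (fst G) \<and>
     (\<forall>e\<in>snd G. \<exists>u v. u \<noteq> v \<and> e = {u, v} \<and> u \<in> fst G \<and> v \<in> fst G)"

definition adj :: "'a graph \<Rightarrow> 'a \<Rightarrow> 'a \<Rightarrow> bool" where
  "adj G u v \<longleftrightarrow> u \<noteq> v \<and> {u, v} \<in> snd G"

definition nbrs :: "'a graph \<Rightarrow> 'a \<Rightarrow> 'a set" where
  "nbrs G v = {u \<in> fst G. adj G u v}"

definition strongly_regular :: "'a graph \<Rightarrow> bool" where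
  "strongly_regular G \<longleftrightarrow> simple_graph G \<and> fst G \<noteq> {} \<and>
     (\<exists>k l m :: nat.
        (\<forall>v\<in>fst G. card (nbrs G v) = k) \<and>
        (\<forall>u\<in>fst G. \<forall>v\<in>fst G. u \<noteq> v \<and> adj G u v \<longrightarrow> card (nbrs G u \<inter> nbrs G v) = l) \<and>
        (\<forall>u\<in>fst G. \<forall>v\<in>fst G. u \<noteq> v \<and> \<not> adj G u v \<longrightarrow> card (nbrs G u \<inter> nbrs G v) = m))"

definition line_graph :: "'a graph \<Rightarrow> 'a set graph" where
  "line_graph G = (snd G, {{e, f} | e f. e \<in> snd G \<and> f \<in> snd G \<and> e \<noteq> f \<and> e \<inter> f \<noteq> {}})"

definition connected_graph :: "'a graph \<Rightarrow> bool" where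
  "connected_graph G \<longleftrightarrow> fst G \<noteq> {} \<and>
     (\<forall>u\<in>fst G. \<forall>v\<in>fst G. (u, v) \<in> {(x, y). adj G x y}\<^sup>*)"

definition graph_iso :: "'a graph \<Rightarrow> 'b graph \<Rightarrow> bool" where
  "graph_iso G H \<longleftrightarrow> (\<exists>f. bij_betw f (fst G) (fst H) \<and>
     (\<forall>u\<in>fst G. \<forall>v\<in>fst G. adj G u v \<longleftrightarrow> adj H (f u) (f v)))"

text \<open>The cycle C_n on vertices 0..n-1 (meaningful for n >= 3).\<close>
definition cycle_graph :: "nat \<Rightarrow> nat graph" where
  "cycle_graph n = ({0..<n}, {{i, (i + 1) mod n} | i. i < n})"

end

theory Submission
  imports Defs
begin


definition inc :: "'a graph \<Rightarrow> 'a \<Rightarrow> 'a set set" where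
  "inc H v = {e \<in> snd H. v \<in> e}"

lemma adj_sym: "adj H u v = adj H v u"
  unfolding adj_def by (auto simp: insert_commute)

lemma adj_in: "simple_graph H \<Longrightarrow> adj H u v \<Longrightarrow> u \<in> fst H \<and> v \<in> fst H"
proof -
  assume s: "simple_graph H" and a: "adj H u v"
  hence "{u,v} \<in> snd H" unfolding adj_def by simp
  then obtain p q where "{u,v} = {p,q}" "p \<in> fst H" "q \<in> fst H"
    using s unfolding simple_graph_def by blast
  moreover have "u \<in> {p,q}" "v \<in> {p,q}" using calculation(1) by (metis insertI1 insert_commute)+
  ultimately show ?thesis by blast
qed

lemma finite_edges: "simple_graph H \<Longrightarrow> finite (snd H)"
proof -
  assume s: "simple_graph H"
  have sub: "snd H \<subseteq> Pow (fst H)"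
  proof
    fix e assume "e \<in> snd H"
    then obtain u v where "e = {u,v}" "u \<in> fst H" "v \<in> fst H"
      using s unfolding simple_graph_def by blast
    thus "e \<in> Pow (fst H)" by simp
  qed
  have "finite (fst H)" using s unfolding simple_graph_def by blast
  hence "finite (Pow (fst H))" by simp
  with sub show ?thesis by (rule finite_subset)
qed

lemma finite_nbrs: "simple_graph H \<Longrightarrow> finite (nbrs H v)"
proof -
  assume "simple_graph H"
  hence "finite (fst H)" unfolding simple_graph_def by blast
  moreover have "nbrs H v \<subseteq> fst H" unfolding nbrs_def by blast
  ultimately show ?thesis using finite_subset by blast
qed

lemma inc_eq: "simple_graph H \<Longrightarrow> inc H v = (\<lambda>u. {u,v}) ` nbrs H v"
proof
  assume s: "simple_graph H"
  show "inc H v \<subseteq> (\<lambda>u. {u,v}) ` nbrs H v"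
  proof
    fix e assume "e \<in> inc H v"
    hence e: "e \<in> snd H" "v \<in> e" unfolding inc_def by auto
    then obtain p q where pq: "p \<noteq> q" "e = {p,q}" "p \<in> fst H" "q \<in> fst H"
      using s unfolding simple_graph_def by blast
    show "e \<in> (\<lambda>u. {u,v}) ` nbrs H v"
    proof (cases "v = p")
      case True
      hence "q \<in> nbrs H v" using pq e unfolding nbrs_def adj_def by (auto simp: insert_commute)
      thus ?thesis using pq True by (auto simp: insert_commute)
    next
      case False
      hence "v = q" using pq e by auto
      hence "p \<in> nbrs H v" using pq e unfolding nbrs_def adj_def by (auto simp: insert_commute)
      thus ?thesis using pq \<open>v = q\<close> by auto
    qed
  qed
next
  show "(\<lambda>u. {u,v}) ` nbrs H v \<subseteq> inc H v"
    unfolding inc_def nbrs_def adj_def by auto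
qed

lemma card_inc: "simple_graph H \<Longrightarrow> card (inc H v) = card (nbrs H v)"
proof -
  assume s: "simple_graph H"
  have "inj_on (\<lambda>u. {u,v}) (nbrs H v)"
    unfolding inj_on_def nbrs_def adj_def by (auto simp: doubleton_eq_iff)
  thus ?thesis using inc_eq[OF s] by (simp add: card_image)
qed

lemma adj_line: "adj (line_graph H) g e \<longleftrightarrow> g \<in> snd H \<and> e \<in> snd H \<and> g \<noteq> e \<and> g \<inter> e \<noteq> {}"
  unfolding adj_def line_graph_def by (auto simp: doubleton_eq_iff)

lemma nbrs_line: "nbrs (line_graph H) e = {g \<in> snd H. e \<in> snd H \<and> g \<noteq> e \<and> g \<inter> e \<noteq> {}}"
proof -
  have f: "fst (line_graph H) = snd H" unfolding line_graph_def by simp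
  show ?thesis unfolding nbrs_def adj_line f by blast
qed

lemma fst_line: "fst (line_graph H) = snd H" unfolding line_graph_def by simp

lemma common:
  assumes s: "simple_graph H" and d: "a \<noteq> b" "b \<noteq> c" "a \<noteq> c"
    and e: "{a,b} \<in> snd H" "{b,c} \<in> snd H"
  shows "nbrs (line_graph H) {a,b} \<inter> nbrs (line_graph H) {b,c}
       = (inc H b - {{a,b},{b,c}}) \<union> ({{a,c}} \<inter> snd H)"
proof
  show "nbrs (line_graph H) {a,b} \<inter> nbrs (line_graph H) {b,c}
       \<subseteq> (inc H b - {{a,b},{b,c}}) \<union> ({{a,c}} \<inter> snd H)"
  proof
    fix g assume g: "g \<in> nbrs (line_graph H) {a,b} \<inter> nbrs (line_graph H) {b,c}"
    hence g1: "g \<in> snd H" "g \<noteq> {a,b}" "g \<noteq> {b,c}" "g \<inter> {a,b} \<noteq> {}" "g \<inter> {b,c} \<noteq> {}"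
      unfolding nbrs_line by auto
    obtain p q where pq: "p \<noteq> q" "g = {p,q}"
      using s g1(1) unfolding simple_graph_def by blast
    show "g \<in> (inc H b - {{a,b},{b,c}}) \<union> ({{a,c}} \<inter> snd H)"
    proof (cases "b \<in> g")
      case True thus ?thesis using g1 unfolding inc_def by auto
    next
      case False
      hence "a \<in> g" "c \<in> g" using g1 by auto
      hence "g = {a,c}" using pq d by auto
      thus ?thesis using g1 by auto
    qed
  qed
next
  show "(inc H b - {{a,b},{b,c}}) \<union> ({{a,c}} \<inter> snd H) \<subseteq>
      nbrs (line_graph H) {a,b} \<inter> nbrs (line_graph H) {b,c}"
  proof
    fix g assume g: "g \<in> (inc H b - {{a,b},{b,c}}) \<union> ({{a,c}} \<inter> snd H)"
    hence "(g \<in> snd H \<and> b \<in> g \<and> g \<noteq> {a,b} \<and> g \<noteq> {b,c}) \<or> (g = {a,c} \<and> {a,c} \<in> snd H)"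
      unfolding inc_def by auto
    thus "g \<in> nbrs (line_graph H) {a,b} \<inter> nbrs (line_graph H) {b,c}"
    proof
      assume h: "g \<in> snd H \<and> b \<in> g \<and> g \<noteq> {a,b} \<and> g \<noteq> {b,c}"
      hence "g \<inter> {a,b} \<noteq> {}" "g \<inter> {b,c} \<noteq> {}" by auto
      thus ?thesis using h e unfolding nbrs_line by blast
    next
      assume h: "g = {a,c} \<and> {a,c} \<in> snd H"
      have n: "{a,c} \<noteq> {a,b}" "{a,c} \<noteq> {b,c}" using d by (simp_all add: doubleton_eq_iff)
      have "{a,c} \<inter> {a,b} \<noteq> {}" "{a,c} \<inter> {b,c} \<noteq> {}" by auto
      thus ?thesis using h e n unfolding nbrs_line by blast
    qed
  qed
qed

lemma card_common:
  assumes s: "simple_graph H" and d: "a \<noteq> b" "b \<noteq> c" "a \<noteq> c"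
    and e: "{a,b} \<in> snd H" "{b,c} \<in> snd H"
  shows "card (nbrs (line_graph H) {a,b} \<inter> nbrs (line_graph H) {b,c})
       = card (nbrs H b) - 2 + (if {a,c} \<in> snd H then 1 else 0)"
proof -
  have fin: "finite (inc H b)" using finite_edges[OF s] unfolding inc_def by auto
  have sub: "{{a,b},{b,c}} \<subseteq> inc H b" using e unfolding inc_def by auto
  have c2: "card {{a,b},{b,c}} = 2" using d by (auto simp: doubleton_eq_iff)
  have c1: "card (inc H b - {{a,b},{b,c}}) = card (nbrs H b) - 2"
    using card_Diff_subset[OF finite_subset[OF sub fin] sub] c2 card_inc[OF s] by simp
  have disj: "(inc H b - {{a,b},{b,c}}) \<inter> ({{a,c}} \<inter> snd H) = {}"
    using d unfolding inc_def by auto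
  have "card ((inc H b - {{a,b},{b,c}}) \<union> ({{a,c}} \<inter> snd H))
      = card (inc H b - {{a,b},{b,c}}) + card ({{a,c}} \<inter> snd H)"
    by (rule card_Un_disjoint) (use fin disj in auto)
  moreover have "card ({{a,c}} \<inter> snd H) = (if {a,c} \<in> snd H then 1 else 0)" by auto
  ultimately show ?thesis using common[OF assms] c1 by simp
qed



lemma lineB:
  assumes S0: "strongly_regular H" and S1: "strongly_regular (line_graph H)"
    and t: "adj H a b" "adj H b c" "adj H a c"
    and p: "adj H x y" "adj H y z" "x \<noteq> z" "\<not> adj H x z"
  shows False
proof -
  have s: "simple_graph H" using S0 unfolding strongly_regular_def by blast
  obtain k l m where K: "\<forall>v\<in>fst H. card (nbrs H v) = k"
    using S0 unfolding strongly_regular_def by blast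
  obtain k' l' m' where L: "\<forall>u\<in>fst (line_graph H). \<forall>v\<in>fst (line_graph H). u \<noteq> v \<and> adj (line_graph H) u v \<longrightarrow> card (nbrs (line_graph H) u \<inter> nbrs (line_graph H) v) = l'"
    using S1 unfolding strongly_regular_def by blast
  have fl: "fst (line_graph H) = snd H" unfolding line_graph_def by simp
  have ta: "a \<noteq> b" "b \<noteq> c" "a \<noteq> c" "{a,b} \<in> snd H" "{b,c} \<in> snd H" "{a,c} \<in> snd H"
    using t unfolding adj_def by auto
  have pa: "x \<noteq> y" "y \<noteq> z" "{x,y} \<in> snd H" "{y,z} \<in> snd H" "{x,z} \<notin> snd H"
    using p unfolding adj_def by auto
  have e1: "{a,b} \<noteq> {b,c}" using ta by (auto simp: doubleton_eq_iff)
  have e2: "{x,y} \<noteq> {y,z}" using pa p(3) by (auto simp: doubleton_eq_iff)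
  have "card (nbrs (line_graph H) {a,b} \<inter> nbrs (line_graph H) {b,c}) = l'"
    using L ta e1 unfolding fl adj_line by auto
  hence A: "card (nbrs H b) - 2 + 1 = l'" using card_common[OF s ta(1-5)] ta(6) by simp
  have "card (nbrs (line_graph H) {x,y} \<inter> nbrs (line_graph H) {y,z}) = l'"
    using L pa e2 unfolding fl adj_line by auto
  hence B: "card (nbrs H y) - 2 = l'" using card_common[OF s pa(1,2) p(3) pa(3,4)] pa(5) by simp
  have "b \<in> fst H" "y \<in> fst H" using adj_in[OF s t(1)] adj_in[OF s p(1)] by auto
  hence "card (nbrs H b) = card (nbrs H y)" using K by auto
  thus False using A B by simp
qed

lemma rt_complete:
  assumes cl: "\<And>x y z. adj G x y \<Longrightarrow> adj G y z \<Longrightarrow> x \<noteq> z \<Longrightarrow> adj G x z"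
    and r: "(u, v) \<in> {(x, y). adj G x y}\<^sup>*"
  shows "u = v \<or> adj G u v"
  using r
proof (induction rule: rtrancl_induct)
  case base thus ?case by simp
next
  case (step y z)
  hence yz: "adj G y z" by simp
  from step.IH show ?case
  proof
    assume "u = y" thus ?thesis using yz by simp
  next
    assume "adj G u y" thus ?thesis using cl yz by blast
  qed
qed

lemma card2_eq:
  assumes "finite S" "card S = 2" "a \<in> S" "b \<in> S" "a \<noteq> b"
  shows "S = {a,b}"
proof -
  have "{a,b} \<subseteq> S" using assms by auto
  moreover have "card {a,b} = 2" using assms by auto
  ultimately show ?thesis using assms by (metis card_subset_eq)
qed

lemma card2_other:
  assumes "card S = 2" "a \<in> S"
  shows "\<exists>b. b \<noteq> a \<and> S = {a,b}"
proof -
  obtain p q where "p \<noteq> q" "S = {p,q}" using assms(1) card_2_iff by metis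
  thus ?thesis using assms(2) by (auto simp: insert_commute)
qed

lemma adj_nbrs: "simple_graph H \<Longrightarrow> y \<in> fst H \<Longrightarrow> adj H x y \<longleftrightarrow> x \<in> nbrs H y"
  unfolding nbrs_def using adj_in[of H x y] by (auto simp: adj_sym)

lemma line_edge:
  assumes s: "simple_graph G" and "snd (line_graph G) \<noteq> {}"
  shows "\<exists>u v w. adj G u v \<and> adj G v w \<and> u \<noteq> w"
proof -
  obtain e f where ef: "e \<in> snd G" "f \<in> snd G" "e \<noteq> f" "e \<inter> f \<noteq> {}"
    using assms(2) unfolding line_graph_def by auto
  obtain p q where pq: "p \<noteq> q" "e = {p,q}" using s ef(1) unfolding simple_graph_def by blast
  obtain r t where rt: "r \<noteq> t" "f = {r,t}" using s ef(2) unfolding simple_graph_def by blast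
  show ?thesis
  proof (cases "p = r")
    case True
    hence "q \<noteq> t" using ef pq rt by auto
    thus ?thesis using True pq rt ef unfolding adj_def by (metis insert_commute)
  next
    case f1: False
    show ?thesis
    proof (cases "p = t")
      case True
      hence "q \<noteq> r" using ef pq rt by auto
      thus ?thesis using True pq rt ef unfolding adj_def by (metis insert_commute)
    next
      case False
      hence "q = r \<or> q = t" using f1 ef pq rt by auto
      thus ?thesis
      proof
        assume qr: "q = r" hence "p \<noteq> t" using False by simp
        thus ?thesis using qr pq rt ef unfolding adj_def by (metis insert_commute)
      next
        assume qt: "q = t" hence "p \<noteq> r" using f1 by simp
        thus ?thesis using qt pq rt ef unfolding adj_def by (metis insert_commute)
      qed
    qed
  qed
qed



lemma iso_intro: "bij_betw f (fst G) (fst H) \<Longrightarrow> \<forall>u\<in>fst G. \<forall>v\<in>fst G. adj G u v \<longleftrightarrow> adj H (f u) (f v) \<Longrightarrow> graph_iso G H"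
  unfolding graph_iso_def by blast

lemma C4E: "snd (cycle_graph 4) = {{0,1},{1,2},{2,3},{3,0}}"
proof -
  have "snd (cycle_graph 4) = (\<lambda>i. {i, (i+1) mod 4}) ` {..<4}" unfolding cycle_graph_def by auto
  moreover have "{..<4::nat} = {0,1,2,3}" by auto
  moreover have "(\<lambda>i::nat. {i,(i+1) mod 4}) ` {0,1,2,3} = {{0,(0+1) mod 4},{1,(1+1) mod 4},{2,(2+1) mod 4},{3,(3+1) mod 4}}"
    by (simp only: image_insert image_empty)
  moreover have "(0+1) mod 4 = (1::nat)" "(1+1) mod 4 = (2::nat)" "(2+1) mod 4 = (3::nat)" "(3+1) mod 4 = (0::nat)" by simp_all
  ultimately show ?thesis by (simp only:)
qed
lemma C5E: "snd (cycle_graph 5) = {{0,1},{1,2},{2,3},{3,4},{4,0}}"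
proof -
  have "snd (cycle_graph 5) = (\<lambda>i. {i, (i+1) mod 5}) ` {..<5}" unfolding cycle_graph_def by auto
  moreover have "{..<5::nat} = {0,1,2,3,4}" by auto
  moreover have "(\<lambda>i::nat. {i,(i+1) mod 5}) ` {0,1,2,3,4} = {{0,(0+1) mod 5},{1,(1+1) mod 5},{2,(2+1) mod 5},{3,(3+1) mod 5},{4,(4+1) mod 5}}"
    by (simp only: image_insert image_empty)
  moreover have "(0+1) mod 5 = (1::nat)" "(1+1) mod 5 = (2::nat)" "(2+1) mod 5 = (3::nat)" "(3+1) mod 5 = (4::nat)" "(4+1) mod 5 = (0::nat)" by simp_all
  ultimately show ?thesis by (simp only:)
qed
lemma C3E: "snd (cycle_graph 3) = {{0,1},{1,2},{2,0}}"
proof -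
  have "snd (cycle_graph 3) = (\<lambda>i. {i, (i+1) mod 3}) ` {..<3}" unfolding cycle_graph_def by auto
  moreover have "{..<3::nat} = {0,1,2}" by auto
  moreover have "(\<lambda>i::nat. {i,(i+1) mod 3}) ` {0,1,2} = {{0,(0+1) mod 3},{1,(1+1) mod 3},{2,(2+1) mod 3}}"
    by (simp only: image_insert image_empty)
  moreover have "(0+1) mod 3 = (1::nat)" "(1+1) mod 3 = (2::nat)" "(2+1) mod 3 = (0::nat)" by simp_all
  ultimately show ?thesis by (simp only:)
qed

lemma CV: "fst (cycle_graph n) = {..<n}" unfolding cycle_graph_def by auto

lemma iso5:
  assumes s: "simple_graph G" and V: "fst G = {a0,a1,a2,a3,a4}"
    and dist: "distinct [a0,a1,a2,a3,a4]"
    and n0: "nbrs G a0 = {a1,a4}" and n1: "nbrs G a1 = {a0,a2}" and n2: "nbrs G a2 = {a1,a3}"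
    and n3: "nbrs G a3 = {a4,a2}" and n4: "nbrs G a4 = {a0,a3}"
  shows "graph_iso G (cycle_graph 5)"
proof -
  have d: "a0 \<noteq> a1" "a0 \<noteq> a2" "a0 \<noteq> a3" "a0 \<noteq> a4" "a1 \<noteq> a2" "a1 \<noteq> a3" "a1 \<noteq> a4"
    "a2 \<noteq> a3" "a2 \<noteq> a4" "a3 \<noteq> a4" using dist by auto
  define f where "f x = (if x = a0 then 0 else if x = a1 then 1 else if x = a2 then 2
     else if x = a3 then 3 else (4::nat))" for x
  have f: "f a0 = 0" "f a1 = 1" "f a2 = 2" "f a3 = 3" "f a4 = 4"
    using d unfolding f_def by auto
  have C: "fst (cycle_graph 5) = {0,1,2,3,4}" unfolding CV by auto
  have bij: "bij_betw f (fst G) (fst (cycle_graph 5))"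
    unfolding bij_betw_def inj_on_def V C using d by (auto simp: f)
  have "\<forall>u\<in>fst G. \<forall>v\<in>fst G. u \<in> nbrs G v \<longleftrightarrow> adj (cycle_graph 5) (f u) (f v)"
    unfolding V using d by (auto simp: n0 n1 n2 n3 n4 f adj_def C5E doubleton_eq_iff)
  hence "\<forall>u\<in>fst G. \<forall>v\<in>fst G. adj G u v \<longleftrightarrow> adj (cycle_graph 5) (f u) (f v)"
    using adj_nbrs[OF s] by blast
  thus ?thesis using iso_intro bij by blast
qed

lemma iso4:
  assumes s: "simple_graph G" and V: "fst G = {a0,a1,a2,a3}"
    and dist: "distinct [a0,a1,a2,a3]"
    and n0: "nbrs G a0 = {a1,a3}" and n1: "nbrs G a1 = {a0,a2}" and n2: "nbrs G a2 = {a1,a3}"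
    and n3: "nbrs G a3 = {a0,a2}"
  shows "graph_iso G (cycle_graph 4)"
proof -
  have d: "a0 \<noteq> a1" "a0 \<noteq> a2" "a0 \<noteq> a3" "a1 \<noteq> a2" "a1 \<noteq> a3"
    "a2 \<noteq> a3" using dist by auto
  define f where "f x = (if x = a0 then 0 else if x = a1 then 1 else if x = a2 then 2
     else (3::nat))" for x
  have f: "f a0 = 0" "f a1 = 1" "f a2 = 2" "f a3 = 3"
    using d unfolding f_def by auto
  have C: "fst (cycle_graph 4) = {0,1,2,3}" unfolding CV by auto
  have bij: "bij_betw f (fst G) (fst (cycle_graph 4))"
    unfolding bij_betw_def inj_on_def V C using d by (auto simp: f)
  have "\<forall>u\<in>fst G. \<forall>v\<in>fst G. u \<in> nbrs G v \<longleftrightarrow> adj (cycle_graph 4) (f u) (f v)"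
    unfolding V using d by (auto simp: n0 n1 n2 n3 f adj_def C4E doubleton_eq_iff)
  hence "\<forall>u\<in>fst G. \<forall>v\<in>fst G. adj G u v \<longleftrightarrow> adj (cycle_graph 4) (f u) (f v)"
    using adj_nbrs[OF s] by blast
  thus ?thesis using iso_intro bij by blast
qed

lemma iso3:
  assumes s: "simple_graph G" and V: "fst G = {a0,a1,a2}"
    and dist: "distinct [a0,a1,a2]"
    and A: "\<forall>x\<in>fst G. \<forall>y\<in>fst G. adj G x y \<longleftrightarrow> x \<noteq> y"
  shows "graph_iso G (cycle_graph 3)"
proof -
  have d: "a0 \<noteq> a1" "a0 \<noteq> a2" "a1 \<noteq> a2" using dist by auto
  define f where "f x = (if x = a0 then 0 else if x = a1 then 1 else (2::nat))" for x
  have f: "f a0 = 0" "f a1 = 1" "f a2 = 2"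
    using d unfolding f_def by auto
  have C: "fst (cycle_graph 3) = {0,1,2}" unfolding CV by auto
  have bij: "bij_betw f (fst G) (fst (cycle_graph 3))"
    unfolding bij_betw_def inj_on_def V C using d by (auto simp: f)
  have "\<forall>u\<in>fst G. \<forall>v\<in>fst G. u \<noteq> v \<longleftrightarrow> adj (cycle_graph 3) (f u) (f v)"
    unfolding V using d by (auto simp: f adj_def C3E doubleton_eq_iff)
  hence "\<forall>u\<in>fst G. \<forall>v\<in>fst G. adj G u v \<longleftrightarrow> adj (cycle_graph 3) (f u) (f v)"
    using A by blast
  thus ?thesis using iso_intro bij by blast
qed



lemma nb1: "simple_graph H \<Longrightarrow> adj H x y \<Longrightarrow> x \<in> nbrs H y"
  unfolding nbrs_def using adj_in[of H x y] by blast

lemma nb2: "simple_graph H \<Longrightarrow> adj H x y \<Longrightarrow> y \<in> nbrs H x"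
  using nb1[of H y x] adj_sym[of H x y] by blast

lemma nbD: "z \<in> nbrs H y \<Longrightarrow> adj H z y \<and> adj H y z \<and> z \<in> fst H"
  unfolding nbrs_def using adj_sym[of H z y] by blast

lemma tri_L:
  assumes "adj G a b" "adj G b c" "adj G a c"
  shows "adj (line_graph G) {a,b} {b,c} \<and> adj (line_graph G) {b,c} {a,c} \<and> adj (line_graph G) {a,b} {a,c}"
proof -
  have d: "a \<noteq> b" "b \<noteq> c" "a \<noteq> c" and e: "{a,b} \<in> snd G" "{b,c} \<in> snd G" "{a,c} \<in> snd G"
    using assms unfolding adj_def by auto
  have n: "{a,b} \<noteq> {b,c}" "{b,c} \<noteq> {a,c}" "{a,b} \<noteq> {a,c}" using d by (simp_all add: doubleton_eq_iff)
  have i: "{a,b} \<inter> {b,c} \<noteq> {}" "{b,c} \<inter> {a,c} \<noteq> {}" "{a,b} \<inter> {a,c} \<noteq> {}" by auto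
  show ?thesis unfolding adj_line using e n i by blast
qed

lemma star_L:
  assumes "adj G a x" "adj G b x" "adj G c x" "a \<noteq> b" "b \<noteq> c" "a \<noteq> c"
  shows "adj (line_graph G) {a,x} {b,x} \<and> adj (line_graph G) {b,x} {c,x} \<and> adj (line_graph G) {a,x} {c,x}"
proof -
  have d: "a \<noteq> x" "b \<noteq> x" "c \<noteq> x" and e: "{a,x} \<in> snd G" "{b,x} \<in> snd G" "{c,x} \<in> snd G"
    using assms unfolding adj_def by auto
  have n: "{a,x} \<noteq> {b,x}" "{b,x} \<noteq> {c,x}" "{a,x} \<noteq> {c,x}" using d assms(4-6) by (simp_all add: doubleton_eq_iff)
  have i: "{a,x} \<inter> {b,x} \<noteq> {}" "{b,x} \<inter> {c,x} \<noteq> {}" "{a,x} \<inter> {c,x} \<noteq> {}" by auto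
  show ?thesis unfolding adj_line using e n i by blast
qed

lemma p4_L:
  assumes "adj G a b" "adj G b c" "adj G c d" "a \<noteq> c" "b \<noteq> d" "a \<noteq> d"
  shows "adj (line_graph G) {a,b} {b,c} \<and> adj (line_graph G) {b,c} {c,d} \<and> {a,b} \<noteq> {c,d}
     \<and> \<not> adj (line_graph G) {a,b} {c,d}"
proof -
  have d: "a \<noteq> b" "b \<noteq> c" "c \<noteq> d" and e: "{a,b} \<in> snd G" "{b,c} \<in> snd G" "{c,d} \<in> snd G"
    using assms unfolding adj_def by auto
  have n: "{a,b} \<noteq> {b,c}" "{b,c} \<noteq> {c,d}" "{a,b} \<noteq> {c,d}" using d assms(4-6) by (simp_all add: doubleton_eq_iff)
  have i: "{a,b} \<inter> {b,c} \<noteq> {}" "{b,c} \<inter> {c,d} \<noteq> {}" by auto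
  have j: "{a,b} \<inter> {c,d} = {}" using d assms(4-6) by auto
  show ?thesis unfolding adj_line using e n i j by blast
qed

theorem mainTheorem8:
  fixes G :: "'a graph"
  assumes "simple_graph G"
    and "connected_graph G"
    and "\<not> graph_iso G (cycle_graph 3)"
    and "\<not> graph_iso G (cycle_graph 4)"
    and "\<not> graph_iso G (cycle_graph 5)"
  shows "\<not> strongly_regular G \<or> \<not> strongly_regular (line_graph G)
         \<or> \<not> strongly_regular (line_graph (line_graph G))"
proof (rule ccontr)
  assume "\<not> ?thesis"
  hence S0: "strongly_regular G" and S1: "strongly_regular (line_graph G)"
    and S2: "strongly_regular (line_graph (line_graph G))" by auto
  have s: "simple_graph G" by (rule assms(1))
  note B0 = lineB[OF S0 S1]
  note B1 = lineB[OF S1 S2]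
  have P4no: "\<And>a b c d e f g. adj G a b \<Longrightarrow> adj G b c \<Longrightarrow> adj G c d \<Longrightarrow> a \<noteq> c \<Longrightarrow> b \<noteq> d \<Longrightarrow> a \<noteq> d
     \<Longrightarrow> adj (line_graph G) e f \<Longrightarrow> adj (line_graph G) f g \<Longrightarrow> adj (line_graph G) e g \<Longrightarrow> False"
  proof -
    fix a b c d e f g
    assume h: "adj G a b" "adj G b c" "adj G c d" "a \<noteq> c" "b \<noteq> d" "a \<noteq> d"
      "adj (line_graph G) e f" "adj (line_graph G) f g" "adj (line_graph G) e g"
    have p: "adj (line_graph G) {a,b} {b,c} \<and> adj (line_graph G) {b,c} {c,d} \<and> {a,b} \<noteq> {c,d}
     \<and> \<not> adj (line_graph G) {a,b} {c,d}" by (rule p4_L[OF h(1-6)])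
    show False using B1[of e f g "{a,b}" "{b,c}" "{c,d}"] h(7-9) p by blast
  qed
  have "fst (line_graph (line_graph G)) \<noteq> {}" using S2 unfolding strongly_regular_def by blast
  hence "snd (line_graph G) \<noteq> {}" by (simp add: fst_line)
  then obtain u v w where uvw: "adj G u v" "adj G v w" "u \<noteq> w" using line_edge[OF s] by blast
  obtain k where K: "\<forall>x\<in>fst G. card (nbrs G x) = k" using S0 unfolding strongly_regular_def by blast
  obtain mu where M: "\<forall>x\<in>fst G. \<forall>y\<in>fst G. x \<noteq> y \<and> \<not> adj G x y \<longrightarrow> card (nbrs G x \<inter> nbrs G y) = mu"
    using S0 unfolding strongly_regular_def by blast
  have V: "u \<in> fst G" "v \<in> fst G" "w \<in> fst G" using adj_in[OF s] uvw by blast+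
  have an: "\<And>x y. y \<in> fst G \<Longrightarrow> adj G x y \<longleftrightarrow> x \<in> nbrs G y" using adj_nbrs[OF s] by blast
  show False
  proof (cases "\<exists>a b c. adj G a b \<and> adj G b c \<and> adj G a c")
    case True
    then obtain a b c where abc: "adj G a b" "adj G b c" "adj G a c" by blast
    have cl: "\<And>x y z. adj G x y \<Longrightarrow> adj G y z \<Longrightarrow> x \<noteq> z \<Longrightarrow> adj G x z"
      using B0[OF abc] by blast
    have comp: "\<And>x y. x \<in> fst G \<Longrightarrow> y \<in> fst G \<Longrightarrow> x \<noteq> y \<Longrightarrow> adj G x y"
    proof -
      fix x y assume "x \<in> fst G" "y \<in> fst G" "x \<noteq> y"
      moreover have r: "(x, y) \<in> {(x, y). adj G x y}\<^sup>*"
        using assms(2) calculation unfolding connected_graph_def by blast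
      have "x = y \<or> adj G x y" by (rule rt_complete[where G=G, OF cl r])
      ultimately show "adj G x y" by blast
    qed
    have dabc: "a \<noteq> b" "b \<noteq> c" "a \<noteq> c" using abc unfolding adj_def by auto
    have Vabc: "a \<in> fst G" "b \<in> fst G" "c \<in> fst G" using adj_in[OF s] abc by blast+
    have VV: "fst G = {a,b,c}"
    proof
      show "fst G \<subseteq> {a,b,c}"
      proof
        fix d assume d: "d \<in> fst G"
        show "d \<in> {a,b,c}"
        proof (rule ccontr)
          assume nd: "d \<notin> {a,b,c}"
          hence "adj G c d" using comp d Vabc by auto
          moreover have "b \<noteq> d" "a \<noteq> d" using nd by auto
          ultimately show False using P4no[of a b c d "{a,b}" "{b,c}" "{a,c}"] abc dabc tri_L[OF abc] by blast
        qed
      qed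
      show "{a,b,c} \<subseteq> fst G" using Vabc by blast
    qed
    have "\<forall>x\<in>fst G. \<forall>y\<in>fst G. adj G x y \<longleftrightarrow> x \<noteq> y"
      using comp unfolding adj_def by blast
    hence "graph_iso G (cycle_graph 3)" using iso3[OF s VV] dabc by simp
    thus False using assms(3) by blast
  next
    case False
    note notri = this
    have nuw: "\<not> adj G u w" using notri uvw by blast
    have fin: "\<And>x. finite (nbrs G x)" using finite_nbrs[OF s] by blast
    have "u \<in> nbrs G v" "w \<in> nbrs G v" using nb1[OF s uvw(1)] nb2[OF s uvw(2)] by auto
    hence "{u,w} \<subseteq> nbrs G v" by blast
    hence "card {u,w} \<le> card (nbrs G v)" using fin card_mono by blast
    hence k2: "2 \<le> k" using uvw(3) K V by simp
    have "v \<in> nbrs G w" using nb1[OF s uvw(2)] .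
    have "\<not> nbrs G w \<subseteq> {v}"
    proof
      assume "nbrs G w \<subseteq> {v}"
      hence "card (nbrs G w) \<le> card {v}" by (intro card_mono) simp_all
      hence "card (nbrs G w) \<le> 1" by simp
      thus False using K V k2 by auto
    qed
    then obtain x where x: "x \<in> nbrs G w" "x \<noteq> v" by blast
    have awx: "adj G w x" using nbD[OF x(1)] by blast
    have xu: "x \<noteq> u"
    proof
      assume "x = u" hence "adj G u w" using awx adj_sym[of G w x] by simp
      thus False using notri uvw by blast
    qed
    have xw: "x \<noteq> w" using awx unfolding adj_def by blast
    have uv: "u \<noteq> v" using uvw unfolding adj_def by blast
    have no3: "\<And>z a b c. adj G a z \<Longrightarrow> adj G b z \<Longrightarrow> adj G c z \<Longrightarrow> a \<noteq> b \<Longrightarrow> b \<noteq> c \<Longrightarrow> a \<noteq> c \<Longrightarrow> False"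
    proof -
      fix z a b c assume h: "adj G a z" "adj G b z" "adj G c z" "a \<noteq> b" "b \<noteq> c" "a \<noteq> c"
      show False using P4no[OF uvw(1,2) awx uvw(3) x(2)[symmetric] xu[symmetric]] star_L[OF h] by blast
    qed
    have nbr2: "\<And>z p q. z \<in> fst G \<Longrightarrow> p \<in> nbrs G z \<Longrightarrow> q \<in> nbrs G z \<Longrightarrow> p \<noteq> q \<Longrightarrow> nbrs G z = {p,q}"
    proof -
      fix z p q assume h: "z \<in> fst G" "p \<in> nbrs G z" "q \<in> nbrs G z" "p \<noteq> q"
      show "nbrs G z = {p,q}"
      proof
        show "{p,q} \<subseteq> nbrs G z" using h by blast
        show "nbrs G z \<subseteq> {p,q}"
        proof
          fix t assume tn: "t \<in> nbrs G z"
          have A: "adj G p z" "adj G q z" "adj G t z" using nbD[OF h(2)] nbD[OF h(3)] nbD[OF tn] by blast+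
          show "t \<in> {p,q}"
          proof (rule ccontr)
            assume "t \<notin> {p,q}" hence "q \<noteq> t" "p \<noteq> t" by auto
            thus False using no3[OF A h(4)] by blast
          qed
        qed
      qed
    qed
    have nv: "nbrs G v = {u,w}" using nbr2 V \<open>u \<in> nbrs G v\<close> \<open>w \<in> nbrs G v\<close> uvw(3) by blast
    hence "k = 2" using K V uvw(3) by auto
    hence deg2: "\<And>z. z \<in> fst G \<Longrightarrow> card (nbrs G z) = 2" using K by blast
    have "v \<in> nbrs G u" using nb2[OF s uvw(1)] .
    then obtain u' where nu: "u' \<noteq> v" "nbrs G u = {v,u'}" using card2_other[OF deg2[OF V(1)]] by blast
    obtain w' where nw: "w' \<noteq> v" "nbrs G w = {v,w'}" using card2_other[OF deg2[OF V(3)] \<open>v \<in> nbrs G w\<close>] by blast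
    have au: "adj G u' u" "u' \<in> fst G" using nu unfolding nbrs_def by auto
    have aw: "adj G w' w" "w' \<in> fst G" using nw unfolding nbrs_def by auto
    have u'u: "u' \<noteq> u" using au unfolding adj_def by blast
    have u'w: "u' \<noteq> w" using au nuw adj_sym[of G u' u] by blast
    have w'w: "w' \<noteq> w" using aw unfolding adj_def by blast
    have w'u: "w' \<noteq> u" using aw nuw by blast
    have "v \<in> nbrs G u \<inter> nbrs G w" using \<open>v \<in> nbrs G u\<close> \<open>v \<in> nbrs G w\<close> by blast
    moreover have "finite (nbrs G u \<inter> nbrs G w)" using fin by blast
    ultimately have "card (nbrs G u \<inter> nbrs G w) > 0" using card_gt_0_iff by blast
    hence "card (nbrs G u \<inter> nbrs G w) \<ge> 1" by simp
    hence mu1: "mu \<ge> 1" using M V uvw(3) nuw by auto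
    have cover: "\<And>z. z \<in> fst G \<Longrightarrow> z \<in> {v,u,w,u',w'}"
    proof -
      fix z assume z: "z \<in> fst G"
      show "z \<in> {v,u,w,u',w'}"
      proof (cases "z = v")
        case True thus ?thesis by simp
      next
        case zv: False
        show ?thesis
        proof (cases "adj G z v")
          case True thus ?thesis using an V nv by auto
        next
          case False
          hence "card (nbrs G z \<inter> nbrs G v) = mu" using M z V zv by blast
          hence "nbrs G z \<inter> nbrs G v \<noteq> {}" using mu1 by auto
          then obtain t where t: "t \<in> nbrs G z" "t \<in> {u,w}" using nv by blast
          hence "adj G t z" unfolding nbrs_def by blast
          hence "z \<in> nbrs G t" using nb2[OF s] by blast
          thus ?thesis using t(2) nu nw zv by auto
        qed
      qed
    qed
    show False
    proof (cases "u' = w'")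
      case True
      have VV: "fst G = {v,u,u',w}"
      proof
        show "fst G \<subseteq> {v,u,u',w}" using cover True by blast
        show "{v,u,u',w} \<subseteq> fst G" using V au by blast
      qed
      have "u \<in> nbrs G u'" "w \<in> nbrs G u'" using nb2[OF s au(1)] nb2[OF s aw(1)] True by auto
      hence nu': "nbrs G u' = {u,w}" using nbr2 au uvw(3) by blast
      have "graph_iso G (cycle_graph 4)"
      proof (rule iso4[OF s VV _ nv nu(2) nu'])
        show "distinct [v,u,u',w]" using uv uvw(3) nu(1) u'u u'w nv uvw(1,2) unfolding adj_def by auto
        show "nbrs G w = {v,u'}" using nw True by simp
      qed
      thus False using assms(4) by blast
    next
      case False
      have "u \<in> nbrs G u'" using nb2[OF s au(1)] .
      then obtain t where t: "t \<noteq> u" "nbrs G u' = {u,t}" using card2_other[OF deg2[OF au(2)]] by blast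
      have at: "adj G t u'" "t \<in> fst G" using t unfolding nbrs_def by auto
      have "t \<noteq> u'" using at unfolding adj_def by blast
      moreover have "t \<noteq> v"
      proof
        assume "t = v" hence "u' \<in> nbrs G v" using nb2[OF s at(1)] by simp
        thus False using nv u'u u'w by auto
      qed
      moreover have "t \<noteq> w"
      proof
        assume "t = w" hence "u' \<in> nbrs G w" using nb2[OF s at(1)] by simp
        thus False using nw nu False by auto
      qed
      ultimately have tw': "t = w'" using cover at t(1) by auto
      have "w \<in> nbrs G w'" "u' \<in> nbrs G w'" using nb2[OF s aw(1)] nb2[OF s at(1)] tw' by auto
      hence nw': "nbrs G w' = {w,u'}" using nbr2[OF aw(2)] u'w by blast
      have VV: "fst G = {v,u,u',w',w}"
      proof
        show "fst G \<subseteq> {v,u,u',w',w}" using cover by blast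
        show "{v,u,u',w',w} \<subseteq> fst G" using V au aw by blast
      qed
      have "graph_iso G (cycle_graph 5)"
      proof (rule iso5[OF s VV _ nv nu(2) _ nw' nw(2)])
        show "distinct [v,u,u',w',w]" using uv uvw(3) nu(1) nw(1) u'u u'w w'u w'w False uvw(1,2) unfolding adj_def by auto
        show "nbrs G u' = {u,w'}" using t tw' by simp
      qed
      thus False using assms(5) by blast
    qed
  qed
qed

end
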